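(* Let $p$ be a prime, $m,t\ge1$, $R^t=\mathbb{F}_{p^m}[u]/\langle u^t\rangle$, $\omega(x)=\omega_0(x)+u\omega_1(x)+\dots+u^{t-1}\omega_{t-1}(x)\in R^t[x]$ with $\omega_i(x)\in\mathbb{F}_{p^m}[x]$, and $R^{t,\omega}=R^t[x]/\langle\omega(x)\rangle$. Let $\omega_0(x)=v_1(x)^{n_1}\cdots v_l(x)^{n_l}$ be the factorization of $\omega_0(x)$ into irreducible polynomials $v_j(x)\in\mathbb{F}_{p^m}[x]$ with positive integers $n_j$. Then the ideals of $R^{t,\omega}$ and their generators have one of the following forms. (a) The trivial ideals $\langle0\rangle$ and $\langle1\rangle$. (b) Any generator of a non-trivial ideal contained in $\langle u\rangle$ has the form $$u^{(t-1)-i}\bigl(v_1(x)^{k_{1,i}}v_2(x)^{k_{2,i}}\cdots v_l(x)^{k_{l,i}}\bigr)-u^{(t-1)-(i-1)}g(x)$$ for some $0\le i\le t-2$, $g(x)\in R^{t,\omega}$, and $0\le k_{j,i}\le n_j$ ($1\le j\le l$), not all $k_{j,i}=n_j$. In fact, any such ideal $I$ has the form $$I=\Bigl\langle u^{(t-1)-i_1}\bigl(v_1(x)^{k_{1,i_1}}\cdots v_l(x)^{k_{l,i_1}}\bigr)-u^{(t-1)-(i_1-1)}g_{i_1}(x),\ \dots,\ u^{(t-1)-i_n}\bigl(v_1(x)^{k_{1,i_n}}\cdots v_l(x)^{k_{l,i_n}}\bigr)-u^{(t-1)-(i_n-1)}g_{i_n}(x)\Bigr\rangle,$$ where $0\le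 i_1<i_2<\dots<i_n\le t-2$ and $g_{i_j}(x)\in R^{t,\omega}$ for $1\le j\le n$. (c) Any non-trivial ideal not contained in $\langle u\rangle$ has the form $$\langle v_1(x)^{k_{1}}v_2(x)^{k_{2}}\cdots v_l(x)^{k_{l}}+u\,r(x)\rangle+I,$$ where $r(x)\in R^{t,\omega}$, $0\le k_j\le n_j$, and $I$ is an ideal of $R^{t,\omega}$ contained in $\langle u\rangle$ (so $I$ is as described in (a) or (b)).
   Context: Elements of $\mathbb{F}_{p^m}[x]$ are regarded as elements of $R^{t,\omega}$ via the natural inclusion $\mathbb{F}_{p^m}\subseteq R^t$. A non-trivial ideal means an ideal different from $\langle 0\rangle$ and $\langle1\rangle$. Note $u^{t}=0$ in $R^{t,\omega}$. *)

theory Defs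
  imports "HOL-Computational_Algebra.Computational_Algebra" "HOL-Library.Cardinality"
begin

definition is_ideal :: "'b::comm_ring_1 set \<Rightarrow> bool" where
  "is_ideal I \<longleftrightarrow> 0 \<in> I \<and> (\<forall>a\<in>I. \<forall>b\<in>I. a + b \<in> I) \<and> (\<forall>a\<in>I. \<forall>r. r * a \<in> I)"

definition gen_ideal :: "'b::comm_ring_1 set \<Rightarrow> 'b set" where
  "gen_ideal S = \<Inter>{I. is_ideal I \<and> S \<subseteq> I}"

text \<open>The ring R^t[x] with R^t = F[u]/<u^t> is modelled via F[u][x] = 'a poly poly
  (outer variable x, coefficients polynomials in u), and the ideal <u^t> is added to
  the defining ideal of the quotient.\<close>

definition uvar :: "'a::comm_ring_1 poly poly" where
  "uvar = [:monom 1 1:]"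

definition emb :: "'a::comm_ring_1 poly \<Rightarrow> 'a poly poly" where
  "emb f = map_poly (\<lambda>c. [:c:]) f"

definition omega :: "nat \<Rightarrow> (nat \<Rightarrow> 'a::comm_ring_1 poly) \<Rightarrow> 'a poly poly" where
  "omega t w = (\<Sum>i<t. uvar ^ i * emb (w i))"

text \<open>Ideals of R^{t,omega} correspond
  (correspondence theorem) to ideals of F[u][x] containing the kernel below; an ideal of
  R^{t,omega} generated by (the images of) S corresponds to gen_ideal (kernel \<union> S).\<close>

definition kernel :: "nat \<Rightarrow> (nat \<Rightarrow> 'a::comm_ring_1 poly) \<Rightarrow> 'a poly poly set" where
  "kernel t w = gen_ideal {uvar ^ t, omega t w}"

definition quot_ideal :: "nat \<Rightarrow> (nat \<Rightarrow> 'a::comm_ring_1 poly) \<Rightarrow> 'a poly poly set \<Rightarrow> bool" where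
  "quot_ideal t w K \<longleftrightarrow> is_ideal K \<and> kernel t w \<subseteq> K"

definition qgen :: "nat \<Rightarrow> (nat \<Rightarrow> 'a::comm_ring_1 poly) \<Rightarrow> 'a poly poly set \<Rightarrow> 'a poly poly set" where
  "qgen t w S = gen_ideal ({uvar ^ t, omega t w} \<union> S)"

text \<open>The generator u^((t-1)-i) (v_1^k_1 ... v_l^k_l) - u^((t-1)-(i-1)) g; note (t-1)-(i-1) = t-i.\<close>

definition genb :: "nat \<Rightarrow> nat \<Rightarrow> (nat \<Rightarrow> 'a::comm_ring_1 poly) \<Rightarrow> nat \<Rightarrow> (nat \<Rightarrow> nat)
     \<Rightarrow> 'a poly poly \<Rightarrow> 'a poly poly" where
  "genb t l v i k g = uvar ^ (t - 1 - i) * emb (\<Prod>j=1..l. v j ^ k j) - uvar ^ (t - i) * g"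

definition form_b :: "nat \<Rightarrow> (nat \<Rightarrow> 'a::comm_ring_1 poly) \<Rightarrow> nat \<Rightarrow> (nat \<Rightarrow> 'a poly)
     \<Rightarrow> (nat \<Rightarrow> nat) \<Rightarrow> 'a poly poly set \<Rightarrow> bool" where
  "form_b t w l v n K \<longleftrightarrow>
     (\<exists>gs :: (nat \<times> (nat \<Rightarrow> nat) \<times> 'a poly poly) list.
        sorted_wrt (\<lambda>a b. fst a < fst b) gs \<and>
        (\<forall>(i, k, g) \<in> set gs. i + 2 \<le> t \<and> (\<forall>j\<in>{1..l}. k j \<le> n j) \<and>
                               \<not> (\<forall>j\<in>{1..l}. k j = n j)) \<and>
        K = qgen t w ((\<lambda>(i, k, g). genb t l v i k g) ` set gs))"

end

theory Submission imports Defs begin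

lemma ideal_UNIV: "is_ideal (UNIV :: 'b::comm_ring_1 set)"
  by (simp add: is_ideal_def)

lemma gen_ideal_is_ideal: "is_ideal (gen_ideal S)"
  unfolding gen_ideal_def is_ideal_def by auto

lemma gen_ideal_sub: "S \<subseteq> gen_ideal S"
  unfolding gen_ideal_def by auto

lemma gen_ideal_least: "is_ideal I \<Longrightarrow> S \<subseteq> I \<Longrightarrow> gen_ideal S \<subseteq> I"
  unfolding gen_ideal_def by auto

lemma gen_ideal_mono: "S \<subseteq> T \<Longrightarrow> gen_ideal S \<subseteq> gen_ideal T"
  unfolding gen_ideal_def by auto

lemma ideal_0: "is_ideal I \<Longrightarrow> 0 \<in> I"
  unfolding is_ideal_def by auto
lemma ideal_add: "is_ideal I \<Longrightarrow> a \<in> I \<Longrightarrow> b \<in> I \<Longrightarrow> a + b \<in> I"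
  unfolding is_ideal_def by auto
lemma ideal_multl: "is_ideal I \<Longrightarrow> a \<in> I \<Longrightarrow> r * a \<in> I"
  unfolding is_ideal_def by auto
lemma ideal_multr: "is_ideal I \<Longrightarrow> a \<in> I \<Longrightarrow> a * r \<in> I"
  unfolding is_ideal_def by (auto simp: mult.commute)
lemma ideal_uminus: "is_ideal I \<Longrightarrow> a \<in> I \<Longrightarrow> - a \<in> I"
  using ideal_multl[of I a "-1"] by simp
lemma ideal_diff: "is_ideal I \<Longrightarrow> a \<in> I \<Longrightarrow> b \<in> I \<Longrightarrow> a - b \<in> I"
  using ideal_add[of I a "-b"] ideal_uminus[of I b] by simp
lemma ideal_Int: "is_ideal I \<Longrightarrow> is_ideal J \<Longrightarrow> is_ideal (I \<inter> J)"
  unfolding is_ideal_def by auto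

lemma emb_add: "emb (f + g) = emb f + emb g"
  unfolding emb_def by (intro poly_eqI) (simp add: coeff_map_poly)
lemma emb_diff: "emb (f - g) = emb f - emb g"
  unfolding emb_def by (intro poly_eqI) (simp add: coeff_map_poly)
lemma emb_pCons: "emb (pCons a f) = pCons [:a:] (emb f)"
  unfolding emb_def by (simp add: map_poly_pCons)
lemma emb_smult: "emb (smult a f) = smult [:a:] (emb f)"
  unfolding emb_def by (rule map_poly_smult) auto
lemma emb_mult: "emb (f * g) = emb f * emb g"
proof (induction f)
  case 0 then show ?case by (simp add: emb_def)
next
  case (pCons a f)
  then show ?case by (simp add: emb_pCons emb_add emb_smult)
qed
lemma emb_1: "emb 1 = 1"
  unfolding emb_def by simp
lemma emb_power: "emb (f ^ k) = emb f ^ k"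
  by (induction k) (simp_all add: emb_1 emb_mult)

lemma uvar_mult: "uvar * p = smult (monom 1 1) p"
  unfolding uvar_def by simp

lemma decomp: "\<exists>f y'. (y :: 'a::comm_ring_1 poly poly) = emb f + uvar * y'"
proof (induction y)
  case 0 then show ?case by (intro exI[of _ 0]) (simp add: emb_def)
next
  case (pCons c z)
  then obtain f z' where z: "z = emb f + uvar * z'" by blast
  obtain a c' where c: "c = pCons a c'" by (cases c) auto
  have "pCons c z = emb (pCons a f) + smult (monom 1 1) (pCons c' z')"
    using z c by (simp add: emb_pCons uvar_mult monom_Suc)
  then have "pCons c z = emb (pCons a f) + uvar * pCons c' z'"
    by (simp only: uvar_mult)
  then show ?case by blast
qed

lemma prime_split:
  fixes p d M :: "'a::field poly"
  assumes "prime_elem p" "d dvd p * M"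
  shows "(\<exists>d'. d = p * d' \<and> d' dvd M) \<or> d dvd M"
proof (cases "p dvd d")
  case True
  then obtain d' where d: "d = p * d'" by (auto elim: dvdE)
  have "p \<noteq> 0" using assms(1) by auto
  then have "d' dvd M" using assms(2) d by simp
  then show ?thesis using d by blast
next
  case False
  from assms(2) obtain e where e: "p * M = d * e" by (auto elim: dvdE)
  then have "p dvd d * e" by (metis dvd_triv_left)
  then have "p dvd e" using False assms(1) prime_elem_dvd_mult_iff by blast
  then obtain e' where e': "e = p * e'" by (auto elim: dvdE)
  have "p \<noteq> 0" using assms(1) by auto
  then have "M = d * e'" using e e' by (simp add: ac_simps)
  then show ?thesis by auto
qed

lemma div_form:
  fixes v :: "nat \<Rightarrow> 'a::field poly" and d :: "'a poly"
  assumes "\<forall>j\<in>{1..l}. irreducible (v j)"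
    and "d dvd (\<Prod>j=1..l. v j ^ n j)"
  shows "\<exists>k. (\<forall>j\<in>{1..l}. k j \<le> n j) \<and> d dvd (\<Prod>j=1..l. v j ^ k j) \<and> (\<Prod>j=1..l. v j ^ k j) dvd d"
  using assms
proof (induction l arbitrary: d)
  case 0
  then show ?case by auto
next
  case (Suc l)
  define A where "A = (\<Prod>j=1..l. v j ^ n j)"
  define q where "q = v (Suc l)"
  have pq: "prime_elem q" using Suc.prems by (simp add: q_def field_poly_irreducible_imp_prime)
  have inner: "\<forall>d. d dvd A * q ^ m \<longrightarrow> (\<exists>k. (\<forall>j\<in>{1..l}. k j \<le> n j) \<and> k (Suc l) \<le> m \<and>
      d dvd (\<Prod>j=1..l. v j ^ k j) * q ^ k (Suc l) \<and> (\<Prod>j=1..l. v j ^ k j) * q ^ k (Suc l) dvd d)" for m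
  proof (induction m)
    case 0
    show ?case
    proof (intro allI impI)
      fix d assume "d dvd A * q ^ 0"
      then obtain k where k: "\<forall>j\<in>{1..l}. k j \<le> n j" "d dvd (\<Prod>j=1..l. v j ^ k j)" "(\<Prod>j=1..l. v j ^ k j) dvd d"
        using Suc.IH[of d] Suc.prems by (auto simp: A_def)
      define k' where "k' = k(Suc l := 0)"
      have pk: "(\<Prod>j=1..l. v j ^ k' j) = (\<Prod>j=1..l. v j ^ k j)"
        by (rule prod.cong) (auto simp: k'_def)
      show "\<exists>k. (\<forall>j\<in>{1..l}. k j \<le> n j) \<and> k (Suc l) \<le> 0 \<and>
      d dvd (\<Prod>j=1..l. v j ^ k j) * q ^ k (Suc l) \<and> (\<Prod>j=1..l. v j ^ k j) * q ^ k (Suc l) dvd d"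
        using k pk by (intro exI[of _ k']) (simp add: k'_def)
    qed
  next
    case (Suc m)
    show ?case
    proof (intro allI impI)
      fix d assume "d dvd A * q ^ Suc m"
      then have "d dvd q * (A * q ^ m)" by (simp add: ac_simps)
      then have "(\<exists>d'. d = q * d' \<and> d' dvd A * q ^ m) \<or> d dvd A * q ^ m"
        using prime_split[OF pq] by blast
      then show "\<exists>k. (\<forall>j\<in>{1..l}. k j \<le> n j) \<and> k (Suc l) \<le> Suc m \<and>
      d dvd (\<Prod>j=1..l. v j ^ k j) * q ^ k (Suc l) \<and> (\<Prod>j=1..l. v j ^ k j) * q ^ k (Suc l) dvd d"
      proof
        assume "\<exists>d'. d = q * d' \<and> d' dvd A * q ^ m"
        then obtain d' where d: "d = q * d'" "d' dvd A * q ^ m" by blast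
        then obtain k where k: "\<forall>j\<in>{1..l}. k j \<le> n j" "k (Suc l) \<le> m"
           "d' dvd (\<Prod>j=1..l. v j ^ k j) * q ^ k (Suc l)" "(\<Prod>j=1..l. v j ^ k j) * q ^ k (Suc l) dvd d'"
          using Suc.IH by blast
        define k' where "k' = k(Suc l := Suc (k (Suc l)))"
        have pk: "(\<Prod>j=1..l. v j ^ k' j) = (\<Prod>j=1..l. v j ^ k j)"
          by (rule prod.cong) (auto simp: k'_def)
        have e: "(\<Prod>j=1..l. v j ^ k' j) * q ^ k' (Suc l) = q * ((\<Prod>j=1..l. v j ^ k j) * q ^ k (Suc l))"
          using pk by (simp add: k'_def ac_simps)
        show ?thesis
          apply (intro exI[of _ k'])
          using k unfolding e d(1) by (auto simp: k'_def)
      next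
        assume "d dvd A * q ^ m"
        then obtain k where k: "\<forall>j\<in>{1..l}. k j \<le> n j" "k (Suc l) \<le> m"
           "d dvd (\<Prod>j=1..l. v j ^ k j) * q ^ k (Suc l)" "(\<Prod>j=1..l. v j ^ k j) * q ^ k (Suc l) dvd d"
          using Suc.IH by blast
        then show ?thesis by (intro exI[of _ k]) auto
      qed
    qed
  qed
  have "d dvd A * q ^ n (Suc l)" using Suc.prems by (simp add: A_def q_def)
  then obtain k where k: "\<forall>j\<in>{1..l}. k j \<le> n j" "k (Suc l) \<le> n (Suc l)"
     "d dvd (\<Prod>j=1..l. v j ^ k j) * q ^ k (Suc l)" "(\<Prod>j=1..l. v j ^ k j) * q ^ k (Suc l) dvd d"
    using inner by blast
  have e: "(\<Prod>j=1..Suc l. v j ^ k j) = (\<Prod>j=1..l. v j ^ k j) * q ^ k (Suc l)"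
    by (simp add: q_def)
  show ?case using k unfolding e by (intro exI[of _ k]) (auto simp: le_Suc_eq q_def)
qed

lemma kernel_sub: "quot_ideal t w K \<Longrightarrow> kernel t w \<subseteq> K"
  by (simp add: quot_ideal_def)

lemma quot_is_ideal: "quot_ideal t w K \<Longrightarrow> is_ideal K"
  by (simp add: quot_ideal_def)

lemma kernel_is_ideal: "is_ideal (kernel t w)"
  unfolding kernel_def by (rule gen_ideal_is_ideal)

lemma omega_in_kernel: "omega t w * y \<in> kernel t w"
  using ideal_multr[OF kernel_is_ideal, of "omega t w" t w y] gen_ideal_sub[of "{uvar ^ t, omega t w}"]
  unfolding kernel_def by auto

lemma upow_in_kernel: "uvar ^ t * y \<in> kernel t w"
  using ideal_multr[OF kernel_is_ideal, of "uvar ^ t" t w y] gen_ideal_sub[of "{uvar ^ t, omega t w}"]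
  unfolding kernel_def by auto

lemma kernel_sub_qgen: "kernel t w \<subseteq> qgen t w S"
  unfolding kernel_def qgen_def by (rule gen_ideal_mono) auto

lemma qgen_is_ideal: "is_ideal (qgen t w S)"
  unfolding qgen_def by (rule gen_ideal_is_ideal)

lemma qgen_sub: "S \<subseteq> qgen t w S"
  unfolding qgen_def using gen_ideal_sub by blast

lemma omega_split:
  assumes "t \<ge> 1"
  shows "\<exists>z. emb (w 0) = omega t w - uvar * z"
proof -
  obtain t' where t: "t = Suc t'" using assms by (cases t) auto
  have "omega t w = emb (w 0) + uvar * (\<Sum>i<t'. uvar ^ i * emb (w (Suc i)))"
    unfolding omega_def t sum.lessThan_Suc_shift by (simp add: sum_distrib_left ac_simps)
  then show ?thesis by (intro exI[of _ "\<Sum>i<t'. uvar ^ i * emb (w (Suc i))"]) simp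
qed

lemma U_form:
  assumes "t \<ge> 1" "x \<in> qgen t w {uvar}"
  shows "\<exists>b c. x = b * omega t w + uvar * c"
proof -
  define T where "T = {b * omega t w + uvar * c | b c. True}"
  have "is_ideal T"
    unfolding is_ideal_def T_def
  proof (intro conjI ballI allI)
    show "0 \<in> {b * omega t w + uvar * c |b c. True}" by (intro CollectI exI[of _ 0]) simp
  next
    fix a b assume "a \<in> {b * omega t w + uvar * c |b c. True}" "b \<in> {b * omega t w + uvar * c |b c. True}"
    then obtain b1 c1 b2 c2 where "a = b1 * omega t w + uvar * c1" "b = b2 * omega t w + uvar * c2" by blast
    then show "a + b \<in> {b * omega t w + uvar * c |b c. True}"
      by (intro CollectI exI[of _ "b1 + b2"] exI[of _ "c1 + c2"]) (simp add: algebra_simps)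
  next
    fix a r assume "a \<in> {b * omega t w + uvar * c |b c. True}"
    then obtain b1 c1 where "a = b1 * omega t w + uvar * c1" by blast
    then show "r * a \<in> {b * omega t w + uvar * c |b c. True}"
      by (intro CollectI exI[of _ "r * b1"] exI[of _ "r * c1"]) (simp add: algebra_simps)
  qed
  moreover have "{uvar ^ t, omega t w} \<union> {uvar} \<subseteq> T"
  proof -
    obtain t' where t: "t = Suc t'" using assms by (cases t) auto
    have "uvar ^ t = 0 * omega t w + uvar * uvar ^ t'" by (simp add: t)
    moreover have "omega t w = 1 * omega t w + uvar * 0" by simp
    moreover have "uvar = 0 * omega t w + uvar * 1" by simp
    ultimately show ?thesis unfolding T_def by blast
  qed
  ultimately have "qgen t w {uvar} \<subseteq> T" unfolding qgen_def by (rule gen_ideal_least)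
  then show ?thesis using assms(2) T_def by auto
qed

lemma level:
  fixes w :: "nat \<Rightarrow> 'a::field poly" and v :: "nat \<Rightarrow> 'a poly"
  assumes K: "quot_ideal t w K" and t: "t \<ge> 1"
    and irr: "\<forall>j\<in>{1..l}. irreducible (v j)"
    and w0: "w 0 = (\<Prod>j=1..l. v j ^ n j)"
  shows "\<exists>k h. (\<forall>j\<in>{1..l}. k j \<le> n j) \<and>
     uvar ^ s * emb (\<Prod>j=1..l. v j ^ k j) + uvar ^ Suc s * h \<in> K \<and>
     (\<forall>f y. uvar ^ s * emb f + uvar ^ Suc s * y \<in> K \<longrightarrow> (\<Prod>j=1..l. v j ^ k j) dvd f)"
proof -
  have KI: "is_ideal K" using K by (rule quot_is_ideal)
  define L where "L = {f. \<exists>y. uvar ^ s * emb f + uvar ^ Suc s * y \<in> K}"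
  have Ladd: "f + g \<in> L" if fg: "f \<in> L" "g \<in> L" for f g
  proof -
    obtain y1 y2 where "uvar ^ s * emb f + uvar ^ Suc s * y1 \<in> K" "uvar ^ s * emb g + uvar ^ Suc s * y2 \<in> K"
      using fg L_def by blast
    from ideal_add[OF KI this] have "uvar ^ s * emb (f + g) + uvar ^ Suc s * (y1 + y2) \<in> K"
      by (simp add: emb_add algebra_simps)
    then show ?thesis unfolding L_def by blast
  qed
  have Lmult: "q * f \<in> L" if fL: "f \<in> L" for f q
  proof -
    obtain y1 where "uvar ^ s * emb f + uvar ^ Suc s * y1 \<in> K"
      using fL L_def by blast
    from ideal_multl[OF KI this, of "emb q"] have "uvar ^ s * emb (q * f) + uvar ^ Suc s * (emb q * y1) \<in> K"
      by (simp add: emb_mult algebra_simps)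
    then show ?thesis unfolding L_def by blast
  qed
  have Ldiff: "f - g \<in> L" if "f \<in> L" "g \<in> L" for f g
    using Ladd[OF that(1) Lmult[OF that(2), of "-1"]] by simp
  obtain z where z: "emb (w 0) = omega t w - uvar * z" using omega_split[OF t] by blast
  have "uvar ^ s * emb (w 0) + uvar ^ Suc s * z = omega t w * uvar ^ s"
    unfolding z by (simp add: algebra_simps)
  also have "\<dots> \<in> K" using omega_in_kernel kernel_sub[OF K] by blast
  finally have w0L: "w 0 \<in> L" unfolding L_def by blast
  have vnz: "\<forall>j\<in>{1..l}. v j ^ n j \<noteq> 0" using irr by (auto simp: irreducible_def)
  have "w 0 \<noteq> 0" unfolding w0 using vnz by (simp add: prod_zero_iff)
  obtain d where d: "d \<in> L" "d \<noteq> 0" and dmin: "\<And>g. g \<in> L \<Longrightarrow> g \<noteq> 0 \<Longrightarrow> degree d \<le> degree g"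
  proof -
    from ex_has_least_nat[of "\<lambda>f. f \<in> L \<and> f \<noteq> 0" "w 0" degree] w0L \<open>w 0 \<noteq> 0\<close>
    obtain d where "d \<in> L \<and> d \<noteq> 0" "\<forall>g. g \<in> L \<and> g \<noteq> 0 \<longrightarrow> degree d \<le> degree g" by auto
    then show ?thesis using that by blast
  qed
  have ddvd: "d dvd f" if "f \<in> L" for f
  proof -
    have "f mod d = f - (f div d) * d" by (simp add: minus_div_mult_eq_mod)
    then have "f mod d \<in> L" using Ldiff[OF that Lmult[OF d(1)]] by simp
    then have "f mod d = 0"
    proof (rule contrapos_pp)
      assume "f mod d \<noteq> 0"
      then have "degree (f mod d) < degree d" using degree_mod_less'[OF d(2)] by blast
      then show "f mod d \<notin> L" using dmin \<open>f mod d \<noteq> 0\<close> by (meson leD)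
    qed
    then show ?thesis by (simp add: dvd_eq_mod_eq_0)
  qed
  obtain k where k: "\<forall>j\<in>{1..l}. k j \<le> n j" "d dvd (\<Prod>j=1..l. v j ^ k j)" "(\<Prod>j=1..l. v j ^ k j) dvd d"
    using div_form[OF irr, of d n] ddvd[OF w0L] unfolding w0 by blast
  have PL: "(\<Prod>j=1..l. v j ^ k j) \<in> L"
  proof -
    obtain c where "(\<Prod>j=1..l. v j ^ k j) = d * c" using k(2) by (auto elim: dvdE)
    then have "(\<Prod>j=1..l. v j ^ k j) = c * d" by (simp add: ac_simps)
    then show ?thesis using Lmult[OF d(1), of c] by simp
  qed
  then obtain h where "uvar ^ s * emb (\<Prod>j=1..l. v j ^ k j) + uvar ^ Suc s * h \<in> K"
    unfolding L_def by blast
  moreover have "\<forall>f y. uvar ^ s * emb f + uvar ^ Suc s * y \<in> K \<longrightarrow> (\<Prod>j=1..l. v j ^ k j) dvd f"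
    using ddvd k(3) unfolding L_def by (blast intro: dvd_trans)
  ultimately show ?thesis using k(1) by blast
qed

lemma main_b:
  fixes w :: "nat \<Rightarrow> 'a::field poly" and v :: "nat \<Rightarrow> 'a poly"
  assumes K: "quot_ideal t w K" and KU: "K \<subseteq> qgen t w {uvar}" and t: "t \<ge> 1"
    and irr: "\<forall>j\<in>{1..l}. irreducible (v j)"
    and w0: "w 0 = (\<Prod>j=1..l. v j ^ n j)"
  shows "form_b t w l v n K"
proof -
  have KI: "is_ideal K" using K by (rule quot_is_ideal)
  define P where "P k = (\<Prod>j=1..l. v j ^ k j)" for k
  define A where "A s k h \<longleftrightarrow> (\<forall>j\<in>{1..l}. k j \<le> n j) \<and>
     uvar ^ s * emb (P k) + uvar ^ Suc s * h \<in> K \<and>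
     (\<forall>f y. uvar ^ s * emb f + uvar ^ Suc s * y \<in> K \<longrightarrow> P k dvd f)" for s k h
  have ex: "\<exists>k h. A s k h" for s
    unfolding A_def P_def by (rule level[OF K t irr w0])
  define kk where "kk s = (SOME k. \<exists>h. A s k h)" for s
  define hh where "hh s = (SOME h. A s (kk s) h)" for s
  have Akh: "A s (kk s) (hh s)" for s
  proof -
    have "\<exists>h. A s (kk s) h" unfolding kk_def using someI_ex[OF ex[of s]] .
    then show ?thesis unfolding hh_def by (rule someI_ex)
  qed
  have kk: "\<forall>j\<in>{1..l}. kk s j \<le> n j" for s using Akh[of s] unfolding A_def by blast
  have hh: "uvar ^ s * emb (P (kk s)) + uvar ^ Suc s * hh s \<in> K" for s
    using Akh[of s] unfolding A_def by blast
  have kdvd: "uvar ^ s * emb f + uvar ^ Suc s * y \<in> K \<Longrightarrow> P (kk s) dvd f" for s f y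
    using Akh[of s] unfolding A_def by blast
  define gs where "gs = filter (\<lambda>(i, k, g). \<not> (\<forall>j\<in>{1..l}. k j = n j))
     (map (\<lambda>i. (i, kk (t - 1 - i), - hh (t - 1 - i))) [0..<t - 1])"
  define G where "G = (\<lambda>(i, k, g). genb t l v i k g) ` set gs"
  define J where "J = qgen t w G"
  have sorted: "sorted_wrt (\<lambda>a b. fst a < fst b) gs"
    unfolding gs_def by (intro sorted_wrt_filter) (simp add: sorted_wrt_map)
  have bounds: "\<forall>(i, k, g) \<in> set gs. i + 2 \<le> t \<and> (\<forall>j\<in>{1..l}. k j \<le> n j) \<and>
                               \<not> (\<forall>j\<in>{1..l}. k j = n j)"
    unfolding gs_def using kk by auto
  have genK: "uvar ^ s * emb (P (kk s)) + uvar ^ Suc s * hh s \<in> G"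
    if "1 \<le> s" "s < t" "\<not> (\<forall>j\<in>{1..l}. kk s j = n j)" for s
  proof -
    define i where "i = t - 1 - s"
    have i: "i < t - 1" "t - 1 - i = s" "t - i = Suc s" using that by (auto simp: i_def)
    have "(i, kk s, - hh s) \<in> set gs" unfolding gs_def using i that by force
    moreover have "genb t l v i (kk s) (- hh s) = uvar ^ s * emb (P (kk s)) + uvar ^ Suc s * hh s"
      unfolding genb_def P_def i by simp
    ultimately show ?thesis unfolding G_def by force
  qed
  have GK: "G \<subseteq> K"
  proof
    fix x assume "x \<in> G"
    then obtain i k g where "(i, k, g) \<in> set gs" "x = genb t l v i k g" unfolding G_def by auto
    then obtain i where i: "i < t - 1" "x = genb t l v i (kk (t - 1 - i)) (- hh (t - 1 - i))"
      unfolding gs_def by auto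
    have "t - i = Suc (t - 1 - i)" using i by auto
    then have "x = uvar ^ (t - 1 - i) * emb (P (kk (t - 1 - i))) + uvar ^ Suc (t - 1 - i) * hh (t - 1 - i)"
      using i unfolding genb_def P_def by simp
    then show "x \<in> K" using hh by simp
  qed
  have JK: "J \<subseteq> K"
    unfolding J_def qgen_def
  proof (rule gen_ideal_least[OF KI])
    have "uvar ^ t \<in> K" using upow_in_kernel[where y=1 and t=t and w=w] kernel_sub[OF K] by auto
    moreover have "omega t w \<in> K" using omega_in_kernel[where y=1 and t=t and w=w] kernel_sub[OF K] by auto
    ultimately show "{uvar ^ t, omega t w} \<union> G \<subseteq> K" using GK by auto
  qed
  have JI: "is_ideal J" unfolding J_def by (rule qgen_is_ideal)
  have kerJ: "kernel t w \<subseteq> J" unfolding J_def by (rule kernel_sub_qgen)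
  have GJ: "G \<subseteq> J" unfolding J_def by (rule qgen_sub)
  have omJ: "omega t w * y \<in> J" for y using omega_in_kernel kerJ by blast
  obtain z where z: "emb (w 0) = omega t w - uvar * z" using omega_split[OF t] by blast
  have step: "\<forall>x\<in>K. \<exists>j\<in>J. \<exists>y. x = j + uvar ^ s * y" if "1 \<le> s" "s \<le> t" for s
    using that
  proof (induction s)
    case 0 then show ?case by simp
  next
    case (Suc s)
    show ?case
    proof (cases "s = 0")
      case True
      show ?thesis
      proof
        fix x assume "x \<in> K"
        then obtain b c where "x = b * omega t w + uvar * c" using U_form[OF t] KU by blast
        moreover have "b * omega t w \<in> J" using omJ[of b] by (simp add: ac_simps)
        ultimately show "\<exists>j\<in>J. \<exists>y. x = j + uvar ^ Suc s * y" using True by auto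
      qed
    next
      case False
      then have s1: "1 \<le> s" "s < t" using Suc.prems by auto
      show ?thesis
      proof
        fix x assume xK: "x \<in> K"
        have IH: "\<forall>x\<in>K. \<exists>j\<in>J. \<exists>y. x = j + uvar ^ s * y" using Suc.IH s1 by simp
        obtain j y where j: "j \<in> J" "x = j + uvar ^ s * y" using IH xK by blast
        obtain f y' where y: "y = emb f + uvar * y'" using decomp by blast
        have "x - j \<in> K" using ideal_diff[OF KI xK] j JK by blast
        moreover have "x - j = uvar ^ s * emb f + uvar ^ Suc s * y'"
          using j y by (simp add: algebra_simps)
        ultimately have "P (kk s) dvd f" using kdvd by metis
        then obtain q where q: "f = P (kk s) * q" by (auto elim: dvdE)
        show "\<exists>j\<in>J. \<exists>y. x = j + uvar ^ Suc s * y"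
        proof (cases "\<forall>j\<in>{1..l}. kk s j = n j")
          case True
          then have "P (kk s) = w 0" unfolding P_def w0 by (intro prod.cong) auto
          then have "x = (j + omega t w * (emb q * uvar ^ s)) + uvar ^ Suc s * (y' - emb q * z)"
            using j y q z by (simp add: emb_mult algebra_simps)
          moreover have "j + omega t w * (emb q * uvar ^ s) \<in> J" using ideal_add[OF JI j(1) omJ] .
          ultimately show ?thesis by blast
        next
          case False
          define gen where "gen = uvar ^ s * emb (P (kk s)) + uvar ^ Suc s * hh s"
          have "gen \<in> J" using genK[OF s1 False] GJ gen_def by blast
          then have "j + emb q * gen \<in> J" using ideal_add[OF JI j(1) ideal_multl[OF JI]] by blast
          moreover have "x = (j + emb q * gen) + uvar ^ Suc s * (y' - emb q * hh s)"
            using j y q unfolding gen_def by (simp add: emb_mult algebra_simps)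
          ultimately show ?thesis by blast
        qed
      qed
    qed
  qed
  have "K \<subseteq> J"
  proof
    fix x assume "x \<in> K"
    moreover have "\<forall>x\<in>K. \<exists>j\<in>J. \<exists>y. x = j + uvar ^ t * y" using step[of t] t by simp
    ultimately obtain j y where "j \<in> J" "x = j + uvar ^ t * y" by blast
    moreover have "uvar ^ t * y \<in> J" using upow_in_kernel kerJ by blast
    ultimately show "x \<in> J" using ideal_add[OF JI] by blast
  qed
  with JK have "K = J" by blast
  then show ?thesis unfolding form_b_def using sorted bounds J_def G_def by blast
qed

theorem theorem3p2:
  fixes p m t l :: nat
    and w :: "nat \<Rightarrow> 'a::{finite, field} poly"
    and v :: "nat \<Rightarrow> 'a poly"
    and n :: "nat \<Rightarrow> nat"
    and K :: "'a poly poly set"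
  assumes "prime p" and "m \<ge> 1" and "CARD('a) = p ^ m" and "t \<ge> 1"
    and "\<forall>j\<in>{1..l}. irreducible (v j) \<and> n j > 0"
    and "\<forall>i\<in>{1..l}. \<forall>j\<in>{1..l}. i \<noteq> j \<longrightarrow> coprime (v i) (v j)"
    and "w 0 = (\<Prod>j=1..l. v j ^ n j)"
    and "quot_ideal t w K"
  shows "(K \<noteq> kernel t w \<and> K \<noteq> UNIV \<and> K \<subseteq> qgen t w {uvar}
            \<longrightarrow> form_b t w l v n K)
       \<and> (K \<noteq> kernel t w \<and> K \<noteq> UNIV \<and> \<not> K \<subseteq> qgen t w {uvar}
            \<longrightarrow> (\<exists>k r I. (\<forall>j\<in>{1..l}. k j \<le> n j) \<and>
                   quot_ideal t w I \<and> I \<subseteq> qgen t w {uvar} \<and>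
                   (I = kernel t w \<or> form_b t w l v n I) \<and>
                   K = gen_ideal (I \<union> {emb (\<Prod>j=1..l. v j ^ k j) + uvar * r})))"
proof -
  have t: "t \<ge> 1" and irr: "\<forall>j\<in>{1..l}. irreducible (v j)" and w0: "w 0 = (\<Prod>j=1..l. v j ^ n j)"
    and K: "quot_ideal t w K" using assms by auto
  have KI: "is_ideal K" using K by (rule quot_is_ideal)
  define U where "U = qgen t w {uvar}"
  have UI: "is_ideal U" unfolding U_def by (rule qgen_is_ideal)
  have uU: "uvar * y \<in> U" for y
    using ideal_multr[OF UI, of uvar y] qgen_sub[of "{uvar}" t w] U_def by auto
  have partb: "K \<subseteq> qgen t w {uvar} \<longrightarrow> form_b t w l v n K"
    using main_b[OF K _ t irr w0] by blast
  define I where "I = K \<inter> U"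
  have II: "quot_ideal t w I"
    unfolding quot_ideal_def I_def using ideal_Int[OF KI UI] kernel_sub[OF K] kernel_sub_qgen U_def by blast
  have IU: "I \<subseteq> qgen t w {uvar}" unfolding I_def U_def by blast
  have Ib: "form_b t w l v n I" using main_b[OF II IU t irr w0] .
  obtain k h where k: "\<forall>j\<in>{1..l}. k j \<le> n j"
     and hK: "uvar ^ 0 * emb (\<Prod>j=1..l. v j ^ k j) + uvar ^ Suc 0 * h \<in> K"
     and kdvd: "\<forall>f y. uvar ^ 0 * emb f + uvar ^ Suc 0 * y \<in> K \<longrightarrow> (\<Prod>j=1..l. v j ^ k j) dvd f"
    using level[OF K t irr w0, of 0] by blast
  define e where "e = emb (\<Prod>j=1..l. v j ^ k j) + uvar * h"
  have eK: "e \<in> K" using hK e_def by simp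
  have "K = gen_ideal (I \<union> {e})"
  proof
    show "gen_ideal (I \<union> {e}) \<subseteq> K"
      by (rule gen_ideal_least[OF KI]) (use eK I_def in auto)
  next
    show "K \<subseteq> gen_ideal (I \<union> {e})"
    proof
      fix x assume xK: "x \<in> K"
      obtain f y where y: "x = emb f + uvar * y" using decomp by blast
      then have "(\<Prod>j=1..l. v j ^ k j) dvd f" using kdvd xK by auto
      then obtain q where q: "f = (\<Prod>j=1..l. v j ^ k j) * q" by (auto elim: dvdE)
      have d: "x - emb q * e = uvar * (y - emb q * h)"
        using y q unfolding e_def by (simp add: emb_mult algebra_simps)
      have "x - emb q * e \<in> K" using ideal_diff[OF KI xK ideal_multl[OF KI eK]] .
      moreover have "x - emb q * e \<in> U" unfolding d by (rule uU)
      ultimately have xi: "x - emb q * e \<in> I" unfolding I_def by blast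
      have GI: "is_ideal (gen_ideal (I \<union> {e}))" by (rule gen_ideal_is_ideal)
      have "x - emb q * e \<in> gen_ideal (I \<union> {e})" using xi gen_ideal_sub by blast
      moreover have "emb q * e \<in> gen_ideal (I \<union> {e})"
        using ideal_multl[OF GI, of e] gen_ideal_sub by blast
      ultimately have "(x - emb q * e) + emb q * e \<in> gen_ideal (I \<union> {e})"
        by (rule ideal_add[OF GI])
      then show "x \<in> gen_ideal (I \<union> {e})" by simp
    qed
  qed
  then have partc: "\<exists>k r I. (\<forall>j\<in>{1..l}. k j \<le> n j) \<and>
                   quot_ideal t w I \<and> I \<subseteq> qgen t w {uvar} \<and>
                   (I = kernel t w \<or> form_b t w l v n I) \<and>
                   K = gen_ideal (I \<union> {emb (\<Prod>j=1..l. v j ^ k j) + uvar * r})"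
    using k II IU Ib unfolding e_def by blast
  show ?thesis using partb partc by blast
qed

end
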